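(* The variety $\mathsf{V}(S_{(4,479)})$ is the ai-semiring variety defined by the identities $x^3\approx x^2$, $xy\approx yx$, $xy\approx x^2y$, $xyz\approx xyz+xy$, $x_1x_2+x_3x_4\approx x_1x_2x_3x_4$.
   Context: An ai-semiring is an algebra $(S,+,\cdot)$ with $(S,+)$ a semilattice, $(S,\cdot)$ a semigroup, and both distributive laws. $\mathsf{V}(S)$ is the variety generated by $S$; "the ai-semiring variety defined by identities $\Sigma$" is the class of all ai-semirings satisfying $\Sigma$. $S_{(4,479)}$ has carrier $\{1,2,3,4\}$; addition: $x+x=x$, $2+x=x$, $1+x=1$ for all $x$, $3+4=1$; multiplication (row $a$, column $b$ gives $a\cdot b$): row $1$: $3,3,3,3$; row $2$: $3,2,3,3$; row $3$: $3,3,3,3$; row $4$: $3,3,3,3$. *)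

theory Defs
  imports Main
begin

definition ai_semiring :: "('a \<Rightarrow> 'a \<Rightarrow> 'a) \<Rightarrow> ('a \<Rightarrow> 'a \<Rightarrow> 'a) \<Rightarrow> bool" where
  "ai_semiring pl ml \<longleftrightarrow>
     (\<forall>x y z. pl (pl x y) z = pl x (pl y z)) \<and>
     (\<forall>x y. pl x y = pl y x) \<and>
     (\<forall>x. pl x x = x) \<and>
     (\<forall>x y z. ml (ml x y) z = ml x (ml y z)) \<and>
     (\<forall>x y z. ml x (pl y z) = pl (ml x y) (ml x z)) \<and>
     (\<forall>x y z. ml (pl y z) x = pl (ml y x) (ml z x))"

datatype trm = Var nat | Add trm trm | Mul trm trm

primrec eval :: "('a \<Rightarrow> 'a \<Rightarrow> 'a) \<Rightarrow> ('a \<Rightarrow> 'a \<Rightarrow> 'a) \<Rightarrow> (nat \<Rightarrow> 'a) \<Rightarrow> trm \<Rightarrow> 'a" where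
  "eval pl ml \<rho> (Var n) = \<rho> n"
| "eval pl ml \<rho> (Add s t) = pl (eval pl ml \<rho> s) (eval pl ml \<rho> t)"
| "eval pl ml \<rho> (Mul s t) = ml (eval pl ml \<rho> s) (eval pl ml \<rho> t)"

definition holds :: "('a \<Rightarrow> 'a \<Rightarrow> 'a) \<Rightarrow> ('a \<Rightarrow> 'a \<Rightarrow> 'a) \<Rightarrow> trm \<Rightarrow> trm \<Rightarrow> bool" where
  "holds pl ml u v \<longleftrightarrow> (\<forall>\<rho>. eval pl ml \<rho> u = eval pl ml \<rho> v)"

datatype s4 = E1 | E2 | E3 | E4

fun s_add :: "s4 \<Rightarrow> s4 \<Rightarrow> s4" where
  "s_add E1 _ = E1"
| "s_add _ E1 = E1"
| "s_add E2 y = y"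
| "s_add x E2 = x"
| "s_add E3 E3 = E3"
| "s_add E4 E4 = E4"
| "s_add E3 E4 = E1"
| "s_add E4 E3 = E1"

fun s_mul :: "s4 \<Rightarrow> s4 \<Rightarrow> s4" where
  "s_mul E2 E2 = E2"
| "s_mul _ _ = E3"

(* Membership in the variety V(S) generated by S: by definition (Birkhoff),
   the class of all algebras satisfying every identity satisfied by S. *)
definition in_V_S :: "('a \<Rightarrow> 'a \<Rightarrow> 'a) \<Rightarrow> ('a \<Rightarrow> 'a \<Rightarrow> 'a) \<Rightarrow> bool" where
  "in_V_S pl ml \<longleftrightarrow> (\<forall>u v. holds s_add s_mul u v \<longrightarrow> holds pl ml u v)"

definition sigma_holds :: "('a \<Rightarrow> 'a \<Rightarrow> 'a) \<Rightarrow> ('a \<Rightarrow> 'a \<Rightarrow> 'a) \<Rightarrow> bool" where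
  "sigma_holds pl ml \<longleftrightarrow>
     (\<forall>x. ml (ml x x) x = ml x x) \<and>
     (\<forall>x y. ml x y = ml y x) \<and>
     (\<forall>x y. ml x y = ml (ml x x) y) \<and>
     (\<forall>x y z. ml (ml x y) z = pl (ml (ml x y) z) (ml x y)) \<and>
     (\<forall>x1 x2 x3 x4. pl (ml x1 x2) (ml x3 x4) = ml (ml (ml x1 x2) x3) x4)"

end

theory Submission
  imports Defs
begin

fun vars :: "trm \<Rightarrow> nat set" where
  "vars (Var n) = {n}"
| "vars (Add s t) = vars s \<union> vars t"
| "vars (Mul s t) = vars s \<union> vars t"

fun CC :: "trm \<Rightarrow> (nat + nat) set" where
  "CC (Var n) = {Inl n}"
| "CC (Add s t) = CC s \<union> CC t"
| "CC (Mul s t) = Inr ` (vars s \<union> vars t)"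

lemma vars_fin: "finite (vars t)" by (induct t) auto
lemma vars_ne: "vars t \<noteq> {}" by (induct t) auto
lemma CC_fin: "finite (CC t)" by (induct t) (auto simp: vars_fin)
lemma CC_ne: "CC t \<noteq> {}" by (induct t) (auto simp: vars_ne)
lemma CC_proj: "case_sum id id ` CC t = vars t"
  by (induct t) (auto simp: image_Un image_image)

definition gen :: "('a \<Rightarrow> 'a \<Rightarrow> 'a) \<Rightarrow> (nat \<Rightarrow> 'a) \<Rightarrow> nat + nat \<Rightarrow> 'a" where
  "gen ml \<rho> c = (case c of Inl n \<Rightarrow> \<rho> n | Inr n \<Rightarrow> ml (\<rho> n) (\<rho> n))"

lemma sl: "ai_semiring pl ml \<Longrightarrow> semilattice_set pl"
  unfolding ai_semiring_def
  by unfold_locales (auto)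

lemma mul_eq:
  assumes A: "ai_semiring pl ml" and S: "sigma_holds pl ml"
  shows "ml a b = pl (ml a a) (ml b b)"
proof -
  from A have as: "\<And>x y z. ml (ml x y) z = ml x (ml y z)" unfolding ai_semiring_def by blast
  from S have c: "\<And>x y. ml x y = ml y x" and q: "\<And>x y. ml x y = ml (ml x x) y"
    and f: "\<And>x1 x2 x3 x4. pl (ml x1 x2) (ml x3 x4) = ml (ml (ml x1 x2) x3) x4"
    unfolding sigma_holds_def by blast+
  have "ml a b = ml (ml a a) b" by (rule q)
  also have "\<dots> = ml b (ml a a)" by (rule c)
  also have "\<dots> = ml (ml b b) (ml a a)" by (rule q)
  also have "\<dots> = ml (ml a a) (ml b b)" by (rule c)
  also have "\<dots> = pl (ml a a) (ml b b)" using f[of a a b b] as by simp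
  finally show ?thesis .
qed

lemma sq_sq:
  assumes A: "ai_semiring pl ml" and S: "sigma_holds pl ml"
  shows "ml (ml a a) (ml a a) = ml a a"
proof -
  from A have as: "\<And>x y z. ml (ml x y) z = ml x (ml y z)" unfolding ai_semiring_def by blast
  from S have cu: "\<And>x. ml (ml x x) x = ml x x" unfolding sigma_holds_def by blast
  have "ml (ml a a) (ml a a) = ml (ml (ml a a) a) a" using as by simp
  also have "\<dots> = ml a a" using cu by simp
  finally show ?thesis .
qed

lemma sq_hom:
  assumes A: "ai_semiring pl ml" and S: "sigma_holds pl ml"
  shows "ml (pl a b) (pl a b) = pl (ml a a) (ml b b)"
proof -
  from A have dl: "\<And>x y z. ml x (pl y z) = pl (ml x y) (ml x z)"
    and dr: "\<And>x y z. ml (pl y z) x = pl (ml y x) (ml z x)"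
    and pa: "\<And>x y z. pl (pl x y) z = pl x (pl y z)"
    and pc: "\<And>x y. pl x y = pl y x" and pi: "\<And>x. pl x x = x"
    unfolding ai_semiring_def by blast+
  have m1: "ml a b = pl (ml a a) (ml b b)" and m2: "ml b a = pl (ml b b) (ml a a)"
    using mul_eq[OF A S] by blast+
  interpret L: semilattice_set pl by (rule sl[OF A])
  have "ml (pl a b) (pl a b) = pl (pl (ml a a) (ml b a)) (pl (ml a b) (ml b b))"
    by (simp add: dl dr)
  also have "\<dots> = pl (ml a a) (ml b b)"
    unfolding m1 m2
    by (simp add: L.assoc L.commute L.left_commute)
  finally show ?thesis .
qed

lemma eval_nf:
  assumes A: "ai_semiring pl ml" and S: "sigma_holds pl ml"
  shows "eval pl ml \<rho> t = semilattice_set.F pl (gen ml \<rho> ` CC t)"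
proof (induct t)
  case (Var n) then show ?case
    using semilattice_set.singleton[OF sl[OF A]] by (simp add: gen_def)
next
  case (Add s t) then show ?case
    using semilattice_set.union[OF sl[OF A]] CC_fin CC_ne by (simp add: image_Un)
next
  case (Mul s t)
  interpret L: semilattice_set pl by (rule sl[OF A])
  let ?sq = "\<lambda>a. ml a a"
  let ?h = "\<lambda>n. ml (\<rho> n) (\<rho> n)"
  have key: "?sq (L.F (gen ml \<rho> ` CC u)) = L.F (?h ` vars u)" for u
  proof -
    have "?sq (L.F (gen ml \<rho> ` CC u)) = L.F (?sq ` gen ml \<rho> ` CC u)"
      by (rule L.hom_commute) (use sq_hom[OF A S] CC_fin CC_ne in auto)
    also have "?sq ` gen ml \<rho> ` CC u = ?h ` (case_sum id id ` CC u)"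
      by (force simp: image_image gen_def sq_sq[OF A S] split: sum.split intro!: image_cong)
    finally show ?thesis by (simp add: CC_proj)
  qed
  have "eval pl ml \<rho> (Mul s t) = pl (?sq (eval pl ml \<rho> s)) (?sq (eval pl ml \<rho> t))"
    unfolding eval.simps by (rule mul_eq[OF A S])
  also have "\<dots> = pl (L.F (?h ` vars s)) (L.F (?h ` vars t))"
    using Mul key by simp
  also have "\<dots> = L.F (?h ` (vars s \<union> vars t))"
    by (simp add: image_Un L.union vars_fin vars_ne)
  also have "?h ` (vars s \<union> vars t) = gen ml \<rho> ` CC (Mul s t)"
    by (auto simp: gen_def image_image)
  finally show ?case .
qed

lemma S_ai: "ai_semiring s_add s_mul"
proof -
  have "s_add (s_add x y) z = s_add x (s_add y z)" for x y z by (cases x; cases y; cases z; simp)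
  moreover have "s_add x y = s_add y x" for x y by (cases x; cases y; simp)
  moreover have "s_add x x = x" for x by (cases x; simp)
  moreover have "s_mul (s_mul x y) z = s_mul x (s_mul y z)" for x y z by (cases x; cases y; cases z; simp)
  moreover have "s_mul x (s_add y z) = s_add (s_mul x y) (s_mul x z)" for x y z by (cases x; cases y; cases z; simp)
  moreover have "s_mul (s_add y z) x = s_add (s_mul y x) (s_mul z x)" for x y z by (cases x; cases y; cases z; simp)
  ultimately show ?thesis unfolding ai_semiring_def by blast
qed

lemma S_sigma: "sigma_holds s_add s_mul"
proof -
  have "s_mul (s_mul x x) x = s_mul x x" for x by (cases x; simp)
  moreover have "s_mul x y = s_mul y x" for x y by (cases x; cases y; simp)
  moreover have "s_mul x y = s_mul (s_mul x x) y" for x y by (cases x; cases y; simp)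
  moreover have "s_mul (s_mul x y) z = s_add (s_mul (s_mul x y) z) (s_mul x y)" for x y z
    by (cases x; cases y; cases z; simp)
  moreover have "s_add (s_mul x1 x2) (s_mul x3 x4) = s_mul (s_mul (s_mul x1 x2) x3) x4" for x1 x2 x3 x4
    by (cases x1; cases x2; cases x3; cases x4; simp)
  ultimately show ?thesis unfolding sigma_holds_def by blast
qed

lemma CC_gen: "finite (f ` CC t)" "f ` CC t \<noteq> {}"
  using CC_fin CC_ne by auto

lemma phi_F:
  assumes that: "\<And>a b. P (s_add a b) \<longleftrightarrow> P a \<or> P b"
    and fin: "finite G" "G \<noteq> {}"
  shows "P (semilattice_set.F s_add G) \<longleftrightarrow> (\<exists>g\<in>G. P g)"
  using fin
proof (induct rule: finite_ne_induct)
  case (singleton x) then show ?case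
    using semilattice_set.singleton[OF sl[OF S_ai]] by simp
next
  case (insert x F) then show ?case
    using semilattice_set.insert[OF sl[OF S_ai]] that by simp
qed

lemma sep:
  assumes "holds s_add s_mul u v"
  shows "CC u = CC v"
proof -
  have ev: "eval s_add s_mul \<rho> t = semilattice_set.F s_add (gen s_mul \<rho> ` CC t)" for \<rho> t
    by (rule eval_nf[OF S_ai S_sigma])
  define P4 where "P4 a \<longleftrightarrow> a = E1 \<or> a = E4" for a
  define P3 where "P3 a \<longleftrightarrow> a = E1 \<or> a = E3" for a
  have h4: "P4 (s_add a b) \<longleftrightarrow> P4 a \<or> P4 b" for a b
    unfolding P4_def by (cases a; cases b; simp)
  have h3: "P3 (s_add a b) \<longleftrightarrow> P3 a \<or> P3 b" for a b
    unfolding P3_def by (cases a; cases b; simp)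
  have c4: "(Inl x \<in> CC t) \<longleftrightarrow> P4 (eval s_add s_mul (\<lambda>n. if n = x then E4 else E2) t)" for x t
    unfolding ev
    by (subst phi_F[of P4, OF h4 CC_gen]) (auto simp: P4_def gen_def split: sum.splits if_splits; case_tac xa; auto)
  have c3: "(Inr x \<in> CC t) \<longleftrightarrow> P3 (eval s_add s_mul (\<lambda>n. if n = x then E4 else E2) t)" for x t
    unfolding ev
    by (subst phi_F[of P3, OF h3 CC_gen]) (auto simp: P3_def gen_def split: sum.splits if_splits; case_tac xa; auto)
  from assms have e: "eval s_add s_mul \<rho> u = eval s_add s_mul \<rho> v" for \<rho>
    unfolding holds_def by blast
  show ?thesis
  proof (rule set_eqI)
    fix c show "c \<in> CC u \<longleftrightarrow> c \<in> CC v"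
      by (cases c) (simp_all only: c4 c3 e)
  qed
qed

lemma transfer:
  assumes "in_V_S pl ml" "\<And>\<rho>. eval s_add s_mul \<rho> u = eval s_add s_mul \<rho> v"
  shows "eval pl ml \<rho> u = eval pl ml \<rho> v"
  using assms unfolding in_V_S_def holds_def by blast

theorem proposition6p8:
  fixes pl ml :: "'a \<Rightarrow> 'a \<Rightarrow> 'a"
  shows "in_V_S pl ml \<longleftrightarrow> (ai_semiring pl ml \<and> sigma_holds pl ml)"
proof
  assume V: "in_V_S pl ml"
  have SA: "ai_semiring s_add s_mul" by (rule S_ai)
  have SS: "sigma_holds s_add s_mul" by (rule S_sigma)
  note A = SA[unfolded ai_semiring_def] and B = SS[unfolded sigma_holds_def]
  have "ai_semiring pl ml"
    unfolding ai_semiring_def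
  proof (intro conjI allI)
    fix x y z
    show "pl (pl x y) z = pl x (pl y z)"
      proof -
        have "eval pl ml ((!) [x,y,z]) (Add (Add (Var 0) (Var 1)) (Var 2)) = eval pl ml ((!) [x,y,z]) (Add (Var 0) (Add (Var 1) (Var 2)))"
          apply (rule transfer[OF V])
          subgoal for \<rho> by (cases "\<rho> 0"; cases "\<rho> 1"; cases "\<rho> 2"; simp)
          done
        then show ?thesis by simp
      qed
    show "ml (ml x y) z = ml x (ml y z)"
      proof -
        have "eval pl ml ((!) [x,y,z]) (Mul (Mul (Var 0) (Var 1)) (Var 2)) = eval pl ml ((!) [x,y,z]) (Mul (Var 0) (Mul (Var 1) (Var 2)))"
          apply (rule transfer[OF V])
          subgoal for \<rho> by (cases "\<rho> 0"; cases "\<rho> 1"; cases "\<rho> 2"; simp)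
          done
        then show ?thesis by simp
      qed
    show "ml x (pl y z) = pl (ml x y) (ml x z)"
      proof -
        have "eval pl ml ((!) [x,y,z]) (Mul (Var 0) (Add (Var 1) (Var 2))) = eval pl ml ((!) [x,y,z]) (Add (Mul (Var 0) (Var 1)) (Mul (Var 0) (Var 2)))"
          apply (rule transfer[OF V])
          subgoal for \<rho> by (cases "\<rho> 0"; cases "\<rho> 1"; cases "\<rho> 2"; simp)
          done
        then show ?thesis by simp
      qed
    show "ml (pl y z) x = pl (ml y x) (ml z x)"
      proof -
        have "eval pl ml ((!) [x,y,z]) (Mul (Add (Var 1) (Var 2)) (Var 0)) = eval pl ml ((!) [x,y,z]) (Add (Mul (Var 1) (Var 0)) (Mul (Var 2) (Var 0)))"
          apply (rule transfer[OF V])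
          subgoal for \<rho> by (cases "\<rho> 0"; cases "\<rho> 1"; cases "\<rho> 2"; simp)
          done
        then show ?thesis by simp
      qed
  next
    fix x y
    show "pl x y = pl y x"
      proof -
        have "eval pl ml ((!) [x,y]) (Add (Var 0) (Var 1)) = eval pl ml ((!) [x,y]) (Add (Var 1) (Var 0))"
          apply (rule transfer[OF V])
          subgoal for \<rho> by (cases "\<rho> 0"; cases "\<rho> 1"; simp)
          done
        then show ?thesis by simp
      qed
  next
    fix x
    show "pl x x = x"
      proof -
        have "eval pl ml ((!) [x]) (Add (Var 0) (Var 0)) = eval pl ml ((!) [x]) (Var 0)"
          apply (rule transfer[OF V])
          subgoal for \<rho> by (cases "\<rho> 0"; simp)
          done
        then show ?thesis by simp
      qed
  qed
  moreover have "sigma_holds pl ml"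
    unfolding sigma_holds_def
  proof (intro conjI allI)
    fix x
    show "ml (ml x x) x = ml x x"
      proof -
        have "eval pl ml ((!) [x]) (Mul (Mul (Var 0) (Var 0)) (Var 0)) = eval pl ml ((!) [x]) (Mul (Var 0) (Var 0))"
          apply (rule transfer[OF V])
          subgoal for \<rho> by (cases "\<rho> 0"; simp)
          done
        then show ?thesis by simp
      qed
  next
    fix x y
    show "ml x y = ml y x"
      proof -
        have "eval pl ml ((!) [x,y]) (Mul (Var 0) (Var 1)) = eval pl ml ((!) [x,y]) (Mul (Var 1) (Var 0))"
          apply (rule transfer[OF V])
          subgoal for \<rho> by (cases "\<rho> 0"; cases "\<rho> 1"; simp)
          done
        then show ?thesis by simp
      qed
    show "ml x y = ml (ml x x) y"
      proof -
        have "eval pl ml ((!) [x,y]) (Mul (Var 0) (Var 1)) = eval pl ml ((!) [x,y]) (Mul (Mul (Var 0) (Var 0)) (Var 1))"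
          apply (rule transfer[OF V])
          subgoal for \<rho> by (cases "\<rho> 0"; cases "\<rho> 1"; simp)
          done
        then show ?thesis by simp
      qed
  next
    fix x y z
    show "ml (ml x y) z = pl (ml (ml x y) z) (ml x y)"
      proof -
        have "eval pl ml ((!) [x,y,z]) (Mul (Mul (Var 0) (Var 1)) (Var 2)) = eval pl ml ((!) [x,y,z]) (Add (Mul (Mul (Var 0) (Var 1)) (Var 2)) (Mul (Var 0) (Var 1)))"
          apply (rule transfer[OF V])
          subgoal for \<rho> by (cases "\<rho> 0"; cases "\<rho> 1"; cases "\<rho> 2"; simp)
          done
        then show ?thesis by simp
      qed
  next
    fix x1 x2 x3 x4
    show "pl (ml x1 x2) (ml x3 x4) = ml (ml (ml x1 x2) x3) x4"
      proof -
        have "eval pl ml ((!) [x1,x2,x3,x4]) (Add (Mul (Var 0) (Var 1)) (Mul (Var 2) (Var 3))) = eval pl ml ((!) [x1,x2,x3,x4]) (Mul (Mul (Mul (Var 0) (Var 1)) (Var 2)) (Var 3))"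
          apply (rule transfer[OF V])
          subgoal for \<rho> by (cases "\<rho> 0"; cases "\<rho> 1"; cases "\<rho> 2"; cases "\<rho> 3"; simp)
          done
        then show ?thesis by simp
      qed
  qed
  ultimately show "ai_semiring pl ml \<and> sigma_holds pl ml" by blast
next
  assume "ai_semiring pl ml \<and> sigma_holds pl ml"
  then have A: "ai_semiring pl ml" and S: "sigma_holds pl ml" by blast+
  show "in_V_S pl ml"
    unfolding in_V_S_def holds_def
    using sep[unfolded holds_def] eval_nf[OF A S] by metis
qed

end
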